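(* There is $\varepsilon_0>0$ such that for every fixed $\varepsilon\in(0,\varepsilon_0)$ the following holds. Let $np\ge(1-\varepsilon)\log n$, $G\sim G(n,p)$ on vertex set $[n]$, and let $S\subseteq[n]$ be a fixed set of size $s\ge n/2-n/\log n$. Then, with probability $1-o(1/\log n)$, every vertex of $V_S$ belongs to the $2$-core of $G[S]$.
   Context: For a set $S\subseteq[n]$, $V_S$ is the set of vertices $v\in S$ that either have at least $3$ neighbours in $S$, or have (at least) $2$ neighbours in $S$ each of which has degree at least $2$ in $G[S]$. The $2$-core of a graph is its unique maximal subgraph of minimum degree at least $2$. $G(n,p)$ is the binomial random graph; $\log$ is the natural logarithm. *)

theory Defs
  imports Complex_Main "HOL-Library.Landau_Symbols"
begin

text \<open>Simple graphs on vertex set [n] = {1..n}: a graph is a set of 2-element subsets.\<close>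

definition all_edges :: "nat \<Rightarrow> nat set set" where
  "all_edges n = {e. e \<subseteq> {1..n} \<and> card e = 2}"

definition gnp_prob :: "nat \<Rightarrow> real \<Rightarrow> (nat set set \<Rightarrow> bool) \<Rightarrow> real" where
  "gnp_prob n p P =
     (\<Sum>E\<in>Pow (all_edges n).
        if P E then p ^ card E * (1 - p) ^ (card (all_edges n) - card E) else 0)"

definition nbrs_in :: "nat set set \<Rightarrow> nat set \<Rightarrow> nat \<Rightarrow> nat set" where
  "nbrs_in E T v = {u \<in> T. {u, v} \<in> E}"

definition deg_in :: "nat set set \<Rightarrow> nat set \<Rightarrow> nat \<Rightarrow> nat" where
  "deg_in E T v = card (nbrs_in E T v)"

definition V_set :: "nat set set \<Rightarrow> nat set \<Rightarrow> nat set" where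
  "V_set E S = {v \<in> S. deg_in E S v \<ge> 3 \<or>
      (\<exists>u w. u \<noteq> w \<and> u \<in> nbrs_in E S v \<and> w \<in> nbrs_in E S v \<and>
             deg_in E S u \<ge> 2 \<and> deg_in E S w \<ge> 2)}"

text \<open>Vertex set of the 2-core of G[S]: the maximal subgraph of minimum degree at least 2
  is the subgraph induced on the union of all vertex sets T \<subseteq> S with G[T] of min degree \<ge> 2.\<close>
definition core2 :: "nat set set \<Rightarrow> nat set \<Rightarrow> nat set" where
  "core2 E S = \<Union>{T. T \<subseteq> S \<and> (\<forall>v\<in>T. deg_in E T v \<ge> 2)}"

end

theory Submission
  imports Defs "HOL-Real_Asymp.Real_Asymp"
begin


lemma finite_all_edges: "finite (all_edges n)"
  unfolding all_edges_def by (rule finite_subset[of _ "Pow {1..n}"]) auto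

lemma sum_pow_weights:
  fixes p :: real
  assumes "finite R"
  shows "(\<Sum>E\<in>Pow R. p ^ card E * (1 - p) ^ (card R - card E)) = 1"
proof -
  have "(\<Prod>x\<in>R. p + (1 - p)) = (\<Sum>X\<in>Pow R. (\<Prod>x\<in>X. p) * (\<Prod>x\<in>R-X. (1-p)))"
    by (rule prod_add[OF assms])
  also have "\<dots> = (\<Sum>E\<in>Pow R. p ^ card E * (1 - p) ^ (card R - card E))"
    by (rule sum.cong) (auto simp: card_Diff_subset finite_subset[OF _ assms])
  finally show ?thesis by simp
qed

lemma gnp_nonneg:
  assumes "0 \<le> p" "p \<le> 1"
  shows "0 \<le> gnp_prob n p P"
  unfolding gnp_prob_def using assms by (intro sum_nonneg) auto

lemma gnp_compl:
  shows "1 - gnp_prob n p P = gnp_prob n p (\<lambda>E. \<not> P E)"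
proof -
  have "1 = (\<Sum>E\<in>Pow (all_edges n). p ^ card E * (1 - p) ^ (card (all_edges n) - card E))"
    using sum_pow_weights[OF finite_all_edges] by simp
  also have "\<dots> = gnp_prob n p P + gnp_prob n p (\<lambda>E. \<not> P E)"
    unfolding gnp_prob_def by (subst sum.distrib[symmetric]) (rule sum.cong, auto)
  finally show ?thesis by simp
qed

lemma gnp_union:
  assumes "0 \<le> p" "p \<le> 1" "finite C"
    and "\<And>E. E \<subseteq> all_edges n \<Longrightarrow> P E \<Longrightarrow> \<exists>c\<in>C. Q c E"
  shows "gnp_prob n p P \<le> (\<Sum>c\<in>C. gnp_prob n p (Q c))"
proof -
  let ?w = "\<lambda>E. p ^ card E * (1 - p) ^ (card (all_edges n) - card E)"
  have w0: "0 \<le> ?w E" for E using assms by auto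
  have "gnp_prob n p P \<le> (\<Sum>E\<in>Pow (all_edges n). \<Sum>c\<in>C. if Q c E then ?w E else 0)"
    unfolding gnp_prob_def
  proof (rule sum_mono)
    fix E assume E: "E \<in> Pow (all_edges n)"
    show "(if P E then ?w E else 0) \<le> (\<Sum>c\<in>C. if Q c E then ?w E else 0)"
    proof (cases "P E")
      case True
      then obtain c where c: "c \<in> C" "Q c E" using assms(4) E by blast
      have "(if Q c E then ?w E else 0) \<le> (\<Sum>c\<in>C. if Q c E then ?w E else 0)"
        by (rule member_le_sum[OF c(1)]) (use w0 assms(3) in auto)
      then show ?thesis using True c by simp
    next
      case False then show ?thesis using w0 by (auto intro!: sum_nonneg)
    qed
  qed
  also have "\<dots> = (\<Sum>c\<in>C. gnp_prob n p (Q c))"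
    unfolding gnp_prob_def by (rule sum.swap)
  finally show ?thesis .
qed

lemma gnp_FA:
  fixes p :: real
  assumes "0 \<le> p" "p \<le> 1" "F \<subseteq> all_edges n" "A \<subseteq> all_edges n"
  shows "gnp_prob n p (\<lambda>E. F \<subseteq> E \<and> E \<inter> A = {}) \<le> p ^ card F * (1 - p) ^ card A"
proof (cases "F \<inter> A = {}")
  case False
  then have "gnp_prob n p (\<lambda>E. F \<subseteq> E \<and> E \<inter> A = {}) = 0"
    unfolding gnp_prob_def by (intro sum.neutral) auto
  then show ?thesis using assms by simp
next
  case True
  define U where "U = all_edges n"
  define R where "R = U - F - A"
  have fU: "finite U" unfolding U_def by (rule finite_all_edges)
  have fR: "finite R" "finite F" "finite A" using fU assms unfolding R_def U_def
    by (auto intro: finite_subset)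
  have cU: "card U = card F + card A + card R"
  proof -
    have "U = F \<union> A \<union> R" using assms unfolding R_def U_def by auto
    moreover have "card (F \<union> A \<union> R) = card F + card A + card R"
      using True fR by (subst card_Un_disjoint, auto simp: R_def card_Un_disjoint)
    ultimately show ?thesis by simp
  qed
  let ?w = "\<lambda>E. p ^ card E * (1 - p) ^ (card U - card E)"
  have "gnp_prob n p (\<lambda>E. F \<subseteq> E \<and> E \<inter> A = {}) = (\<Sum>E\<in>{E\<in>Pow U. F \<subseteq> E \<and> E \<inter> A = {}}. ?w E)"
    unfolding gnp_prob_def U_def[symmetric] by (subst sum.inter_filter[symmetric]) (auto simp: fU)
  also have "{E\<in>Pow U. F \<subseteq> E \<and> E \<inter> A = {}} = (\<lambda>E'. F \<union> E') ` Pow R"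
  proof (rule set_eqI, rule iffI)
    fix E assume "E \<in> {E\<in>Pow U. F \<subseteq> E \<and> E \<inter> A = {}}"
    then have "E = F \<union> (E - F)" "E - F \<in> Pow R" unfolding R_def by auto
    then show "E \<in> (\<lambda>E'. F \<union> E') ` Pow R" by blast
  qed (use assms True in \<open>auto simp: R_def U_def\<close>)
  also have "(\<Sum>E\<in>(\<lambda>E'. F \<union> E') ` Pow R. ?w E) = (\<Sum>E'\<in>Pow R. ?w (F \<union> E'))"
  proof -
    have "inj_on (\<lambda>E'. F \<union> E') (Pow R)"
    proof (rule inj_onI)
      fix x y assume "x \<in> Pow R" "y \<in> Pow R" "F \<union> x = F \<union> y"
      then show "x = y" unfolding R_def by blast
    qed
    then show ?thesis by (simp add: sum.reindex)
  qed
  also have "\<dots> = (\<Sum>E'\<in>Pow R. (p ^ card F * (1 - p) ^ card A) * (p ^ card E' * (1 - p) ^ (card R - card E')))"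
  proof (rule sum.cong[OF refl])
    fix E' assume E': "E' \<in> Pow R"
    have fE: "finite E'" using E' fR by (auto intro: finite_subset)
    have c1: "card (F \<union> E') = card F + card E'"
      using E' fR fE by (subst card_Un_disjoint) (auto simp: R_def)
    have c2: "card E' \<le> card R" using E' fR by (auto intro: card_mono)
    have "card U - card (F \<union> E') = card A + (card R - card E')"
      using c1 c2 cU by simp
    then show "?w (F \<union> E') = (p ^ card F * (1 - p) ^ card A) * (p ^ card E' * (1 - p) ^ (card R - card E'))"
      by (simp add: c1 power_add algebra_simps)
  qed
  also have "\<dots> = p ^ card F * (1 - p) ^ card A"
    by (simp add: sum_distrib_left[symmetric] sum_pow_weights[OF fR(1)])
  finally show ?thesis by simp
qed




definition badC1 :: "nat set set \<Rightarrow> nat set \<Rightarrow> bool" where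
  "badC1 E S = (\<exists>x y z. x \<in> S \<and> y \<in> S \<and> z \<in> S \<and> x \<noteq> y \<and> y \<noteq> z \<and> x \<noteq> z \<and>
     {x,y} \<in> E \<and> {y,z} \<in> E \<and> deg_in E S x \<le> 3 \<and> deg_in E S y \<le> 3 \<and> deg_in E S z \<le> 3)"

definition badC2 :: "nat set set \<Rightarrow> nat set \<Rightarrow> bool" where
  "badC2 E S = (\<exists>y a b c. y \<in> S \<and> a \<in> S \<and> b \<in> S \<and> c \<in> S \<and> y \<noteq> a \<and> y \<noteq> b \<and> y \<noteq> c \<and>
     a \<noteq> b \<and> a \<noteq> c \<and> b \<noteq> c \<and>
     {y,a} \<in> E \<and> {y,b} \<in> E \<and> {y,c} \<in> E \<and> deg_in E S a \<le> 3 \<and> deg_in E S b \<le> 3 \<and> deg_in E S c \<le> 3)"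

lemma card_pick:
  assumes "Suc k \<le> card A"
  obtains a where "a \<in> A" "k \<le> card (A - {a})"
proof -
  have "A \<noteq> {}" "finite A" using assms by (auto intro: card_ge_0_finite)
  then obtain a where "a \<in> A" by blast
  then have "card (A - {a}) = card A - 1" using \<open>finite A\<close> by simp
  then show ?thesis using that \<open>a \<in> A\<close> assms by simp
qed

lemma card_two:
  assumes "2 \<le> card A"
  obtains a b where "a \<in> A" "b \<in> A" "a \<noteq> b"
proof -
  obtain a where a: "a \<in> A" "1 \<le> card (A - {a})" using card_pick[of 1 A] assms by auto
  obtain b where b: "b \<in> A - {a}" using card_pick[of 0 "A - {a}"] a by auto
  show ?thesis using that a b by auto
qed

lemma card_three:
  assumes "3 \<le> card A"
  obtains a b c where "a \<in> A" "b \<in> A" "c \<in> A" "a \<noteq> b" "a \<noteq> c" "b \<noteq> c"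
proof -
  obtain a where a: "a \<in> A" "2 \<le> card (A - {a})" using card_pick[of 2 A] assms by auto
  obtain b c where "b \<in> A - {a}" "c \<in> A - {a}" "b \<noteq> c" using card_two[OF a(2)] by blast
  then show ?thesis using that a by auto
qed

lemma two_card:
  assumes "finite A" "a \<in> A" "b \<in> A" "a \<noteq> b"
  shows "2 \<le> card A"
proof -
  have "card {a,b} \<le> card A" using assms by (intro card_mono) auto
  then show ?thesis using assms by simp
qed

lemma nbrs_sym: "u \<in> nbrs_in E S v \<longleftrightarrow> u \<in> S \<and> {v,u} \<in> E"
  unfolding nbrs_in_def by (auto simp: insert_commute)

lemma high_two:
  assumes fin: "finite S" and nb2: "\<not> badC2 E S" and loop: "\<And>u v. {u,v} \<in> E \<Longrightarrow> u \<noteq> v"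
    and vS: "v \<in> S" and d: "3 \<le> deg_in E S v"
    and lowmax: "card {u \<in> nbrs_in E S v. deg_in E S u \<le> 3} \<le> card (nbrs_in E S v) - 2"
  shows "\<exists>a b. a \<noteq> b \<and> a \<in> nbrs_in E S v \<and> b \<in> nbrs_in E S v \<and> 4 \<le> deg_in E S a \<and> 4 \<le> deg_in E S b"
proof -
  let ?N = "nbrs_in E S v"
  let ?L = "{u \<in> ?N. deg_in E S u \<le> 3}"
  let ?H = "{u \<in> ?N. 4 \<le> deg_in E S u}"
  have fN: "finite ?N" using fin unfolding nbrs_in_def by auto
  have "?N = ?L \<union> ?H" by auto
  moreover have "?L \<inter> ?H = {}" by auto
  ultimately have "card ?N = card ?L + card ?H" using fN
    by (metis (no_types, lifting) card_Un_disjoint finite_Un)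
  moreover have "3 \<le> card ?N" using d unfolding deg_in_def .
  ultimately have "2 \<le> card ?H" using lowmax by linarith
  then obtain a b where "a \<in> ?H" "b \<in> ?H" "a \<noteq> b" by (rule card_two)
  then show ?thesis by blast
qed

lemma det:
  assumes fin: "finite S" and nb1: "\<not> badC1 E S" and nb2: "\<not> badC2 E S"
    and loop: "\<And>u v. {u,v} \<in> E \<Longrightarrow> u \<noteq> v"
  shows "V_set E S \<subseteq> core2 E S"
proof -
  define d where "d = deg_in E S"
  define T where "T = {v \<in> S. 4 \<le> d v} \<union> V_set E S"
  have TS: "T \<subseteq> S" unfolding T_def V_set_def by auto
  have fT: "finite T" using TS fin by (rule finite_subset)
  have nbS: "u \<in> nbrs_in E S v \<Longrightarrow> u \<in> S \<and> {u,v} \<in> E" for u v unfolding nbrs_in_def by auto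
  have low2: "card {u \<in> nbrs_in E S v. d u \<le> 3} \<le> 2" if vS: "v \<in> S" for v
  proof (rule ccontr)
    assume "\<not> ?thesis"
    then have "3 \<le> card {u \<in> nbrs_in E S v. d u \<le> 3}" by simp
    then obtain a b c where abc: "a \<in> {u \<in> nbrs_in E S v. d u \<le> 3}" "b \<in> {u \<in> nbrs_in E S v. d u \<le> 3}"
      "c \<in> {u \<in> nbrs_in E S v. d u \<le> 3}" "a \<noteq> b" "a \<noteq> c" "b \<noteq> c"
      by (rule card_three)
    have e: "a \<in> S" "{v,a} \<in> E" "b \<in> S" "{v,b} \<in> E" "c \<in> S" "{v,c} \<in> E"
      using abc(1-3) by (simp_all add: nbrs_sym)
    have ne: "v \<noteq> a" "v \<noteq> b" "v \<noteq> c" using loop e by blast+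
    have dd: "deg_in E S a \<le> 3" "deg_in E S b \<le> 3" "deg_in E S c \<le> 3"
      using abc(1-3) unfolding d_def by simp_all
    have "badC2 E S" unfolding badC2_def
      apply (rule exI[of _ v], rule exI[of _ a], rule exI[of _ b], rule exI[of _ c])
      using vS e ne dd abc(4-6) by simp
    then show False using nb2 by simp
  qed
  have low1: "a = b" if "v \<in> S" "d v \<le> 3" "a \<in> nbrs_in E S v" "b \<in> nbrs_in E S v" "d a \<le> 3" "d b \<le> 3" for v a b
  proof (rule ccontr)
    assume "a \<noteq> b"
    moreover have "a \<noteq> v" "b \<noteq> v" using that loop unfolding nbrs_in_def by auto
    moreover have e: "a \<in> S" "{a,v} \<in> E" "b \<in> S" "{v,b} \<in> E"
      using that(3,4) nbrs_sym[of b E S v] by (simp_all add: nbrs_in_def)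
    ultimately have "badC1 E S" unfolding badC1_def
      apply (rule_tac exI[of _ a], rule_tac exI[of _ v], rule_tac exI[of _ b])
      using that unfolding d_def by simp
    then show False using nb1 by simp
  qed
  have deg2: "2 \<le> deg_in E T v" if "a \<in> T" "b \<in> T" "a \<noteq> b" "{a,v} \<in> E" "{b,v} \<in> E" for v a b
  proof -
    have "finite (nbrs_in E T v)" using fT unfolding nbrs_in_def by auto
    then show ?thesis unfolding deg_in_def
      by (rule two_card[of _ a b]) (use that in \<open>auto simp: nbrs_in_def\<close>)
  qed
  have mindeg: "2 \<le> deg_in E T v" if vT: "v \<in> T" for v
  proof -
    have vS: "v \<in> S" using vT TS by auto
    let ?N = "nbrs_in E S v"
    have fN: "finite ?N" using fin unfolding nbrs_in_def by auto
    show ?thesis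
    proof (cases "4 \<le> d v")
      case True
      have "card {u \<in> ?N. d u \<le> 3} \<le> card ?N - 2"
        using low2[OF vS] True unfolding d_def deg_in_def by linarith
      then obtain a b where "a \<noteq> b" "a \<in> ?N" "b \<in> ?N" "4 \<le> d a" "4 \<le> d b"
        using high_two[OF fin nb2 loop vS] True unfolding d_def by fastforce
      then show ?thesis using deg2[of a b v] nbS unfolding T_def by auto
    next
      case False
      then have vV: "v \<in> V_set E S" using vT unfolding T_def by auto
      show ?thesis
      proof (cases "3 \<le> d v")
        case True
        have "card {u \<in> ?N. d u \<le> 3} \<le> 1"
        proof (rule ccontr)
          assume "\<not> ?thesis"
          then have "2 \<le> card {u \<in> ?N. d u \<le> 3}" by simp
          then obtain a b where ab: "a \<in> {u \<in> ?N. d u \<le> 3}" "b \<in> {u \<in> ?N. d u \<le> 3}" "a \<noteq> b"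
            by (rule card_two)
          have "d v \<le> 3" using False by simp
          then have "a = b" using low1[of v a b] vS ab(1,2) by simp
          then show False using ab(3) by simp
        qed
        then have "card {u \<in> ?N. d u \<le> 3} \<le> card ?N - 2"
          using True unfolding d_def deg_in_def by linarith
        then obtain a b where "a \<noteq> b" "a \<in> ?N" "b \<in> ?N" "4 \<le> d a" "4 \<le> d b"
          using high_two[OF fin nb2 loop vS] True unfolding d_def by fastforce
        then show ?thesis using deg2[of a b v] nbS unfolding T_def by auto
      next
        case False2: False
        then have "\<not> 3 \<le> deg_in E S v" unfolding d_def .
        then obtain u w where uw: "u \<noteq> w" "u \<in> ?N" "w \<in> ?N" "2 \<le> d u" "2 \<le> d w"
          using vV unfolding V_set_def d_def by auto
        have dv: "d v \<le> 3" using False by simp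
        have inT: "x \<in> T" if x: "x \<in> ?N" "2 \<le> d x" for x
        proof (cases "4 \<le> d x")
          case True then show ?thesis using x nbS unfolding T_def by auto
        next
          case Fx: False
          have xS: "x \<in> S" and xv: "{x,v} \<in> E" using x nbS by auto
          have xv': "x \<noteq> v" using loop xv by blast
          have "2 \<le> card (nbrs_in E S x)" using x unfolding d_def deg_in_def by simp
          then obtain t1 t2 where t: "t1 \<in> nbrs_in E S x" "t2 \<in> nbrs_in E S x" "t1 \<noteq> t2" by (rule card_two)
          obtain t where tn: "t \<in> nbrs_in E S x" "t \<noteq> v" using t by blast
          have vn: "v \<in> nbrs_in E S x" using vS xv unfolding nbrs_in_def by (auto simp: insert_commute)
          have dt: "4 \<le> d t"
          proof (rule ccontr)
            assume "\<not> 4 \<le> d t"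
            then show False using low1[OF xS _ tn(1) vn] Fx dv tn(2) by auto
          qed
          have dv2: "2 \<le> d v"
            using two_card[OF fN uw(2) uw(3) uw(1)] unfolding d_def deg_in_def .
          have "x \<in> V_set E S"
            unfolding V_set_def using xS vn tn dt dv2 unfolding d_def by force
          then show ?thesis unfolding T_def by auto
        qed
        have "u \<in> T" "w \<in> T" using inT uw by auto
        then show ?thesis using deg2[of u w v] uw nbS by auto
      qed
    qed
  qed
  have "T \<subseteq> core2 E S" unfolding core2_def using TS mindeg by blast
  moreover have "V_set E S \<subseteq> T" unfolding T_def by auto
  ultimately show ?thesis by blast
qed




lemma Bbound:
  fixes p :: real
  assumes "0 \<le> p" "R \<subseteq> {1..n}"
  shows "(\<Sum>N\<in>{N. N \<subseteq> R \<and> card N \<le> 3}. p ^ card N) \<le> 4 * (1 + real n * p) ^ 3"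
proof -
  have fR: "finite R" using assms(2) by (rule finite_subset) simp
  have eq: "{N. N \<subseteq> R \<and> card N \<le> 3} = (\<Union>j\<in>{..3::nat}. {N. N \<subseteq> R \<and> card N = j})" by auto
  have fin: "finite {N. N \<subseteq> R \<and> card N = j}" for j
    using fR by (rule_tac finite_subset[of _ "Pow R"]) auto
  have "(\<Sum>N\<in>{N. N \<subseteq> R \<and> card N \<le> 3}. p ^ card N) =
        (\<Sum>j\<in>{..3::nat}. \<Sum>N\<in>{N. N \<subseteq> R \<and> card N = j}. p ^ card N)"
    unfolding eq by (rule sum.UNION_disjoint) (auto simp: fin)
  also have "\<dots> = (\<Sum>j\<in>{..3::nat}. real (card R choose j) * p ^ j)"
  proof (rule sum.cong[OF refl])
    fix j :: nat
    have "(\<Sum>N\<in>{N. N \<subseteq> R \<and> card N = j}. p ^ card N) = (\<Sum>N\<in>{N. N \<subseteq> R \<and> card N = j}. p ^ j)"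
      by (rule sum.cong) auto
    also have "\<dots> = real (card R choose j) * p ^ j" using n_subsets[OF fR, of j] by simp
    finally show "(\<Sum>N\<in>{N. N \<subseteq> R \<and> card N = j}. p ^ card N) = real (card R choose j) * p ^ j" .
  qed
  also have "\<dots> \<le> (\<Sum>j\<in>{..3::nat}. (1 + real n * p) ^ 3)"
  proof (rule sum_mono)
    fix j :: nat assume j: "j \<in> {..3}"
    have cR: "card R \<le> n" using card_mono[OF _ assms(2)] by simp
    have "real (card R choose j) \<le> real n ^ j"
    proof (cases "j \<le> card R")
      case True
      have "card R choose j \<le> card R ^ j" by (rule binomial_le_pow[OF True])
      also have "\<dots> \<le> n ^ j" using cR by (rule power_mono) simp
      finally show ?thesis by (metis of_nat_le_iff of_nat_power)
    next
      case False then show ?thesis by (simp add: binomial_eq_0)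
    qed
    then have "real (card R choose j) * p ^ j \<le> real n ^ j * p ^ j"
      using assms(1) by (intro mult_right_mono) auto
    also have "\<dots> = (real n * p) ^ j" by (simp add: power_mult_distrib)
    also have "\<dots> \<le> (1 + real n * p) ^ j" using assms(1) by (intro power_mono) auto
    also have "\<dots> \<le> (1 + real n * p) ^ 3" using j assms(1) by (intro power_increasing) auto
    finally show "real (card R choose j) * p ^ j \<le> (1 + real n * p) ^ 3" .
  qed
  also have "\<dots> = 4 * (1 + real n * p) ^ 3" by simp
  finally show ?thesis .
qed




definition star :: "nat \<Rightarrow> nat set \<Rightarrow> nat set set" where
  "star x N = (\<lambda>y. {x,y}) ` N"

lemma star_card: "finite N \<Longrightarrow> card (star x N) = card N"
  unfolding star_def by (rule card_image) (auto simp: inj_on_def doubleton_eq_iff)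

lemma star_edges: "x \<in> {1..n} \<Longrightarrow> N \<subseteq> {1..n} \<Longrightarrow> x \<notin> N \<Longrightarrow> star x N \<subseteq> all_edges n"
  unfolding star_def all_edges_def by (auto simp: card_insert_if)

lemma star_disj: "x \<noteq> x' \<Longrightarrow> x \<in> W \<Longrightarrow> x' \<in> W \<Longrightarrow> N \<inter> W = {} \<Longrightarrow> N' \<inter> W = {} \<Longrightarrow>
   star x N \<inter> star x' N' = {}"
  unfolding star_def by (auto simp: doubleton_eq_iff)

lemma star_disj2: "N \<inter> N' = {} \<Longrightarrow> star x N \<inter> star x N' = {}"
  unfolding star_def by (auto simp: doubleton_eq_iff)

lemma star_F0: "\<forall>e\<in>F0. e \<subseteq> W \<Longrightarrow> N \<inter> W = {} \<Longrightarrow> F0 \<inter> star x N = {}"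
  unfolding star_def by blast

lemma sum_cube:
  fixes f :: "'a \<Rightarrow> real"
  shows "(\<Sum>c\<in>A \<times> A \<times> A. f (fst c) * f (fst (snd c)) * f (snd (snd c))) = (sum f A) ^ 3"
proof -
  have "(\<Sum>c\<in>A \<times> A \<times> A. f (fst c) * f (fst (snd c)) * f (snd (snd c)))
      = (\<Sum>a\<in>A. \<Sum>bc\<in>A \<times> A. f a * f (fst bc) * f (snd bc))"
    by (subst sum.cartesian_product) (simp add: case_prod_beta)
  also have "\<dots> = (\<Sum>a\<in>A. \<Sum>b\<in>A. \<Sum>c\<in>A. f a * f b * f c)"
    by (subst sum.cartesian_product) (simp add: case_prod_beta)
  also have "\<dots> = (sum f A) ^ 3"
    by (simp add: power3_eq_cube sum_distrib_left sum_distrib_right mult_ac)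
  finally show ?thesis .
qed




lemma lowprob:
  fixes p :: real
  assumes p: "0 \<le> p" "p \<le> 1" and S: "S \<subseteq> {1..n}" and W: "W \<subseteq> S"
    and l: "l1 \<in> W" "l2 \<in> W" "l3 \<in> W" "l1 \<noteq> l2" "l1 \<noteq> l3" "l2 \<noteq> l3"
    and F0: "F0 \<subseteq> all_edges n" "\<forall>e\<in>F0. e \<subseteq> W"
  shows "gnp_prob n p (\<lambda>E. F0 \<subseteq> E \<and> deg_in E S l1 \<le> 3 \<and> deg_in E S l2 \<le> 3 \<and> deg_in E S l3 \<le> 3)
     \<le> p ^ card F0 * (4 * (1 + real n * p) ^ 3) ^ 3 * (1 - p) ^ (3 * (card S - card W - 3))"
proof -
  define R where "R = S - W"
  define NS where "NS = {N. N \<subseteq> R \<and> card N \<le> 3}"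
  define C where "C = NS \<times> NS \<times> NS"
  define Fc where "Fc = (\<lambda>c. F0 \<union> star l1 (fst c) \<union> star l2 (fst (snd c)) \<union> star l3 (snd (snd c)))"
  define Ac where "Ac = (\<lambda>c. star l1 (R - fst c) \<union> star l2 (R - fst (snd c)) \<union> star l3 (R - snd (snd c)))"
  define K where "K = card S - card W - 3"
  have fS: "finite S" using S by (rule finite_subset) simp
  have fR: "finite R" unfolding R_def using fS by simp
  have fNS: "finite NS" unfolding NS_def using fR by (rule_tac finite_subset[of _ "Pow R"]) auto
  have fC: "finite C" unfolding C_def using fNS by simp
  have RW: "R \<inter> W = {}" unfolding R_def by auto
  have Rn: "R \<subseteq> {1..n}" unfolding R_def using S by auto
  have ln: "l1 \<in> {1..n}" "l2 \<in> {1..n}" "l3 \<in> {1..n}" using l W S by auto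
  have lR: "l1 \<notin> R" "l2 \<notin> R" "l3 \<notin> R" using l RW by auto
  have cR: "card R = card S - card W" unfolding R_def using W fS by (simp add: card_Diff_subset finite_subset)
  have step1: "gnp_prob n p (\<lambda>E. F0 \<subseteq> E \<and> deg_in E S l1 \<le> 3 \<and> deg_in E S l2 \<le> 3 \<and> deg_in E S l3 \<le> 3)
      \<le> (\<Sum>c\<in>C. gnp_prob n p (\<lambda>E. Fc c \<subseteq> E \<and> E \<inter> Ac c = {}))"
  proof (rule gnp_union[OF p fC])
    fix E assume E: "E \<subseteq> all_edges n" and ev: "F0 \<subseteq> E \<and> deg_in E S l1 \<le> 3 \<and> deg_in E S l2 \<le> 3 \<and> deg_in E S l3 \<le> 3"
    let ?c = "(nbrs_in E R l1, nbrs_in E R l2, nbrs_in E R l3)"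
    have inNS: "nbrs_in E R l \<in> NS" if "deg_in E S l \<le> 3" for l
    proof -
      have "card (nbrs_in E R l) \<le> card (nbrs_in E S l)"
        by (rule card_mono) (use fS in \<open>auto simp: nbrs_in_def R_def\<close>)
      then show ?thesis using that unfolding NS_def deg_in_def nbrs_in_def by auto
    qed
    have "?c \<in> C" unfolding C_def using inNS ev by auto
    moreover have "star l (nbrs_in E R l) \<subseteq> E" for l
      unfolding star_def nbrs_in_def by (auto simp: insert_commute)
    moreover have "E \<inter> star l (R - nbrs_in E R l) = {}" for l
      unfolding star_def nbrs_in_def by (auto simp: insert_commute)
    ultimately show "\<exists>c\<in>C. Fc c \<subseteq> E \<and> E \<inter> Ac c = {}"
      using ev unfolding Fc_def Ac_def by (intro bexI[of _ ?c]) auto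
  qed
  have step2: "gnp_prob n p (\<lambda>E. Fc c \<subseteq> E \<and> E \<inter> Ac c = {})
      \<le> p ^ card F0 * (1 - p) ^ (3 * K) * (p ^ card (fst c) * p ^ card (fst (snd c)) * p ^ card (snd (snd c)))"
    if c: "c \<in> C" for c
  proof -
    obtain N1 N2 N3 where c3: "c = (N1, N2, N3)" by (cases c) auto
    have N: "N1 \<subseteq> R" "N2 \<subseteq> R" "N3 \<subseteq> R" "card N1 \<le> 3" "card N2 \<le> 3" "card N3 \<le> 3"
      using c unfolding c3 C_def NS_def by auto
    have fN: "finite N1" "finite N2" "finite N3" using N fR by (auto intro: finite_subset)
    have NW: "N1 \<inter> W = {}" "N2 \<inter> W = {}" "N3 \<inter> W = {}" using N RW by auto
    have DW: "(R - N1) \<inter> W = {}" "(R - N2) \<inter> W = {}" "(R - N3) \<inter> W = {}" using RW by auto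
    have F0fin: "finite F0" using F0(1) finite_all_edges by (rule finite_subset)
    have se: "star l N \<subseteq> all_edges n" if "l \<in> {l1,l2,l3}" "N \<subseteq> R" for l N
      by (rule star_edges) (use that ln Rn lR in auto)
    have FcE: "Fc c \<subseteq> all_edges n"
      unfolding Fc_def c3 using F0(1) se[of l1 N1] se[of l2 N2] se[of l3 N3] N by auto
    have AcE: "Ac c \<subseteq> all_edges n"
      unfolding Ac_def c3 using se[of l1 "R - N1"] se[of l2 "R-N2"] se[of l3 "R-N3"] by auto
    have cardF: "card (Fc c) = card F0 + card N1 + card N2 + card N3"
    proof -
      have d1: "F0 \<inter> star l1 N1 = {}" by (rule star_F0[OF F0(2) NW(1)])
      have d2: "(F0 \<union> star l1 N1) \<inter> star l2 N2 = {}"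
        using star_F0[OF F0(2) NW(2)] star_disj[OF l(4,1,2) NW(1,2)] by auto
      have d3: "(F0 \<union> star l1 N1 \<union> star l2 N2) \<inter> star l3 N3 = {}"
        using star_F0[OF F0(2) NW(3)] star_disj[OF l(5,1,3) NW(1,3)] star_disj[OF l(6,2,3) NW(2,3)] by auto
      have fs: "finite (star l N)" if "finite N" for l N using that unfolding star_def by simp
      show ?thesis unfolding Fc_def c3 fst_conv snd_conv
        using d1 d2 d3 F0fin fN fs star_card
        by (simp add: card_Un_disjoint)
    qed
    have cardA: "3 * K \<le> card (Ac c)"
    proof -
      have fD: "finite (R - N)" for N using fR by simp
      have d2: "star l1 (R - N1) \<inter> star l2 (R - N2) = {}"
        using star_disj[OF l(4,1,2) DW(1,2)] by auto
      have d3: "(star l1 (R - N1) \<union> star l2 (R - N2)) \<inter> star l3 (R - N3) = {}"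
        using star_disj[OF l(5,1,3) DW(1,3)] star_disj[OF l(6,2,3) DW(2,3)] by auto
      have fs: "finite (star l N)" if "finite N" for l N using that unfolding star_def by simp
      have "card (Ac c) = card (R - N1) + card (R - N2) + card (R - N3)"
        unfolding Ac_def c3 fst_conv snd_conv
        using d2 d3 fD fs star_card by (simp add: card_Un_disjoint)
      moreover have "card (R - N) = card R - card N" if "N \<subseteq> R" for N
        using that fR by (simp add: card_Diff_subset finite_subset)
      ultimately show ?thesis using N unfolding K_def cR by simp
    qed
    have "gnp_prob n p (\<lambda>E. Fc c \<subseteq> E \<and> E \<inter> Ac c = {}) \<le> p ^ card (Fc c) * (1 - p) ^ card (Ac c)"
      by (rule gnp_FA[OF p FcE AcE])
    also have "\<dots> \<le> p ^ card (Fc c) * (1 - p) ^ (3 * K)"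
      using p cardA by (intro mult_left_mono power_decreasing) auto
    also have "\<dots> = p ^ card F0 * (1 - p) ^ (3 * K) * (p ^ card N1 * p ^ card N2 * p ^ card N3)"
      unfolding cardF by (simp add: power_add mult_ac)
    finally show ?thesis unfolding c3 by simp
  qed
  have "(\<Sum>c\<in>C. gnp_prob n p (\<lambda>E. Fc c \<subseteq> E \<and> E \<inter> Ac c = {}))
     \<le> (\<Sum>c\<in>C. p ^ card F0 * (1 - p) ^ (3 * K) * (p ^ card (fst c) * p ^ card (fst (snd c)) * p ^ card (snd (snd c))))"
    by (rule sum_mono) (rule step2)
  also have "\<dots> = p ^ card F0 * (1 - p) ^ (3 * K) * (\<Sum>N\<in>NS. p ^ card N) ^ 3"
    unfolding C_def by (simp add: sum_distrib_left[symmetric] sum_cube[of "\<lambda>N. p ^ card N"])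
  also have "\<dots> \<le> p ^ card F0 * (1 - p) ^ (3 * K) * (4 * (1 + real n * p) ^ 3) ^ 3"
  proof -
    have "(\<Sum>N\<in>NS. p ^ card N) \<le> 4 * (1 + real n * p) ^ 3"
      unfolding NS_def by (rule Bbound[OF p(1) Rn])
    moreover have "0 \<le> (\<Sum>N\<in>NS. p ^ card N)" using p by (simp add: sum_nonneg)
    ultimately show ?thesis using p by (intro mult_left_mono power_mono) auto
  qed
  finally show ?thesis using step1 unfolding K_def by (simp add: mult_ac)
qed




lemma gnp_false: "gnp_prob n p (\<lambda>E. False) = 0"
  unfolding gnp_prob_def by simp

lemma bad1prob:
  fixes p :: real
  assumes p: "0 \<le> p" "p \<le> 1" and S: "S \<subseteq> {1..n}"
  shows "gnp_prob n p (\<lambda>E. badC1 E S) \<le> real n ^ 3 * (p ^ 2 * (4 * (1 + real n * p) ^ 3) ^ 3 * (1 - p) ^ (3 * (card S - 7)))"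
proof -
  define Bd where "Bd = p ^ 2 * (4 * (1 + real n * p) ^ 3) ^ 3 * (1 - p) ^ (3 * (card S - 7))"
  define Q where "Q = (\<lambda>(c::nat\<times>nat\<times>nat) E. fst c \<noteq> fst (snd c) \<and> fst (snd c) \<noteq> snd (snd c) \<and> fst c \<noteq> snd (snd c) \<and>
     {{fst c, fst (snd c)}, {fst (snd c), snd (snd c)}} \<subseteq> E \<and>
     deg_in E S (fst c) \<le> 3 \<and> deg_in E S (fst (snd c)) \<le> 3 \<and> deg_in E S (snd (snd c)) \<le> 3)"
  have fS: "finite S" using S by (rule finite_subset) simp
  have "gnp_prob n p (\<lambda>E. badC1 E S) \<le> (\<Sum>c\<in>S \<times> S \<times> S. gnp_prob n p (Q c))"
  proof (rule gnp_union[OF p])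
    show "finite (S \<times> S \<times> S)" using fS by simp
    fix E assume "badC1 E S"
    then obtain x y z where "x \<in> S \<and> y \<in> S \<and> z \<in> S \<and> x \<noteq> y \<and> y \<noteq> z \<and> x \<noteq> z \<and>
     {x,y} \<in> E \<and> {y,z} \<in> E \<and> deg_in E S x \<le> 3 \<and> deg_in E S y \<le> 3 \<and> deg_in E S z \<le> 3"
      unfolding badC1_def by blast
    then show "\<exists>c\<in>S \<times> S \<times> S. Q c E" unfolding Q_def by (intro bexI[of _ "(x,y,z)"]) auto
  qed
  also have "\<dots> \<le> (\<Sum>c\<in>S \<times> S \<times> S. Bd)"
  proof (rule sum_mono)
    fix c assume c: "c \<in> S \<times> S \<times> S"
    obtain x y z where c3: "c = (x,y,z)" by (cases c) auto
    have Bd0: "0 \<le> Bd" unfolding Bd_def using p by simp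
    show "gnp_prob n p (Q c) \<le> Bd"
    proof (cases "x \<noteq> y \<and> y \<noteq> z \<and> x \<noteq> z")
      case False
      then have "Q c = (\<lambda>E. False)" unfolding Q_def c3 by auto
      then show ?thesis using Bd0 by (simp add: gnp_false)
    next
      case True
      have xyz: "x \<in> S" "y \<in> S" "z \<in> S" using c c3 by auto
      have F0: "{{x,y},{y,z}} \<subseteq> all_edges n" using True xyz S unfolding all_edges_def by auto
      have cF: "card {{x,y},{y,z}} = 2" using True by (auto simp: doubleton_eq_iff)
      have cW: "card {x,y,z} = 3" using True by auto
      have "gnp_prob n p (Q c) = gnp_prob n p (\<lambda>E. {{x,y},{y,z}} \<subseteq> E \<and> deg_in E S x \<le> 3 \<and> deg_in E S y \<le> 3 \<and> deg_in E S z \<le> 3)"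
        unfolding Q_def c3 using True by simp
      also have "\<dots> \<le> p ^ card {{x,y},{y,z}} * (4 * (1 + real n * p) ^ 3) ^ 3 * (1 - p) ^ (3 * (card S - card {x,y,z} - 3))"
        by (rule lowprob[OF p S]) (use xyz True F0 in auto)
      also have "\<dots> \<le> Bd" unfolding Bd_def cF cW using p
        by (intro mult_left_mono power_decreasing) auto
      finally show ?thesis .
    qed
  qed
  also have "\<dots> = real (card S) ^ 3 * Bd" by (simp add: card_cartesian_product power3_eq_cube power4_eq_xxxx)
  also have "\<dots> \<le> real n ^ 3 * Bd"
  proof -
    have "card S \<le> n" using card_mono[OF _ S] by simp
    then show ?thesis unfolding Bd_def using p by (intro mult_right_mono power_mono) auto
  qed
  finally show ?thesis unfolding Bd_def .
qed

lemma bad2prob: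
  fixes p :: real
  assumes p: "0 \<le> p" "p \<le> 1" and S: "S \<subseteq> {1..n}"
  shows "gnp_prob n p (\<lambda>E. badC2 E S) \<le> real n ^ 4 * (p ^ 3 * (4 * (1 + real n * p) ^ 3) ^ 3 * (1 - p) ^ (3 * (card S - 7)))"
proof -
  define Bd where "Bd = p ^ 3 * (4 * (1 + real n * p) ^ 3) ^ 3 * (1 - p) ^ (3 * (card S - 7))"
  define Q where "Q = (\<lambda>(c::nat\<times>nat\<times>nat\<times>nat) E. case c of (y,a,b,d) \<Rightarrow> y \<noteq> a \<and> y \<noteq> b \<and> y \<noteq> d \<and> a \<noteq> b \<and> a \<noteq> d \<and> b \<noteq> d \<and>
     {{y,a},{y,b},{y,d}} \<subseteq> E \<and>
     deg_in E S a \<le> 3 \<and> deg_in E S b \<le> 3 \<and> deg_in E S d \<le> 3)"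
  have fS: "finite S" using S by (rule finite_subset) simp
  have "gnp_prob n p (\<lambda>E. badC2 E S) \<le> (\<Sum>c\<in>S \<times> S \<times> S \<times> S. gnp_prob n p (Q c))"
  proof (rule gnp_union[OF p])
    show "finite (S \<times> S \<times> S \<times> S)" using fS by simp
    fix E assume "badC2 E S"
    then obtain y a b d where "y \<in> S \<and> a \<in> S \<and> b \<in> S \<and> d \<in> S \<and> y \<noteq> a \<and> y \<noteq> b \<and> y \<noteq> d \<and>
     a \<noteq> b \<and> a \<noteq> d \<and> b \<noteq> d \<and>
     {y,a} \<in> E \<and> {y,b} \<in> E \<and> {y,d} \<in> E \<and> deg_in E S a \<le> 3 \<and> deg_in E S b \<le> 3 \<and> deg_in E S d \<le> 3"
      unfolding badC2_def by blast
    then show "\<exists>c\<in>S \<times> S \<times> S \<times> S. Q c E" unfolding Q_def by (intro bexI[of _ "(y,a,b,d)"]) auto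
  qed
  also have "\<dots> \<le> (\<Sum>c\<in>S \<times> S \<times> S \<times> S. Bd)"
  proof (rule sum_mono)
    fix c assume c: "c \<in> S \<times> S \<times> S \<times> S"
    obtain y a b d where c3: "c = (y,a,b,d)" by (cases c) auto
    have Bd0: "0 \<le> Bd" unfolding Bd_def using p by simp
    show "gnp_prob n p (Q c) \<le> Bd"
    proof (cases "y \<noteq> a \<and> y \<noteq> b \<and> y \<noteq> d \<and> a \<noteq> b \<and> a \<noteq> d \<and> b \<noteq> d")
      case False
      then have "Q c = (\<lambda>E. False)" unfolding Q_def c3 by auto
      then show ?thesis using Bd0 by (simp add: gnp_false)
    next
      case True
      have xyz: "y \<in> S" "a \<in> S" "b \<in> S" "d \<in> S" using c c3 by auto
      have F0: "{{y,a},{y,b},{y,d}} \<subseteq> all_edges n" using True xyz S unfolding all_edges_def by auto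
      have cF: "card {{y,a},{y,b},{y,d}} = 3" using True by (auto simp: doubleton_eq_iff)
      have cW: "card {y,a,b,d} = 4" using True by auto
      have "gnp_prob n p (Q c) = gnp_prob n p (\<lambda>E. {{y,a},{y,b},{y,d}} \<subseteq> E \<and> deg_in E S a \<le> 3 \<and> deg_in E S b \<le> 3 \<and> deg_in E S d \<le> 3)"
        unfolding Q_def c3 using True by simp
      also have "\<dots> \<le> p ^ card {{y,a},{y,b},{y,d}} * (4 * (1 + real n * p) ^ 3) ^ 3 * (1 - p) ^ (3 * (card S - card {y,a,b,d} - 3))"
        by (rule lowprob[OF p S]) (use xyz True F0 in auto)
      also have "\<dots> \<le> Bd" unfolding Bd_def cF cW using p
        by (intro mult_left_mono power_decreasing) auto
      finally show ?thesis .
    qed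
  qed
  also have "\<dots> = real (card S) ^ 4 * Bd" by (simp add: card_cartesian_product power3_eq_cube power4_eq_xxxx)
  also have "\<dots> \<le> real n ^ 4 * Bd"
  proof -
    have "card S \<le> n" using card_mono[OF _ S] by simp
    then show ?thesis unfolding Bd_def using p by (intro mult_right_mono power_mono) auto
  qed
  finally show ?thesis unfolding Bd_def .
qed

lemma badprob:
  fixes p :: real
  assumes p: "0 \<le> p" "p \<le> 1" and S: "S \<subseteq> {1..n}"
  shows "gnp_prob n p (\<lambda>E. \<not> V_set E S \<subseteq> core2 E S) \<le>
     real n ^ 3 * (p ^ 2 * (4 * (1 + real n * p) ^ 3) ^ 3 * (1 - p) ^ (3 * (card S - 7))) +
     real n ^ 4 * (p ^ 3 * (4 * (1 + real n * p) ^ 3) ^ 3 * (1 - p) ^ (3 * (card S - 7)))"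
proof -
  have fS: "finite S" using S by (rule finite_subset) simp
  have "gnp_prob n p (\<lambda>E. \<not> V_set E S \<subseteq> core2 E S) \<le>
     (\<Sum>b\<in>{True, False}. gnp_prob n p (\<lambda>E. if b then badC1 E S else badC2 E S))"
  proof (rule gnp_union[OF p])
    fix E assume E: "E \<subseteq> all_edges n" and nv: "\<not> V_set E S \<subseteq> core2 E S"
    have loop: "u \<noteq> v" if "{u,v} \<in> E" for u v
      using that E unfolding all_edges_def by auto
    have "badC1 E S \<or> badC2 E S" using det[OF fS _ _ loop] nv by blast
    then show "\<exists>b\<in>{True, False}. if b then badC1 E S else badC2 E S" by auto
  qed simp
  also have "\<dots> = gnp_prob n p (\<lambda>E. badC1 E S) + gnp_prob n p (\<lambda>E. badC2 E S)" by simp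
  finally show ?thesis using bad1prob[OF p S] bad2prob[OF p S] by linarith
qed




lemma numbound:
  fixes p :: real and n k :: nat
  assumes p: "0 \<le> p" "p \<le> 1" and ln72: "72 \<le> ln (real n)"
    and lam: "(3/4) * ln (real n) \<le> real n * p"
    and k: "real n / 2 - real n / ln (real n) \<le> real k"
  shows "(real n ^ 3 * (p ^ 2 * (4 * (1 + real n * p) ^ 3) ^ 3 * (1 - p) ^ (3 * (k - 7))) +
     real n ^ 4 * (p ^ 3 * (4 * (1 + real n * p) ^ 3) ^ 3 * (1 - p) ^ (3 * (k - 7))))
     \<le> (128 * exp 21 * 288 ^ 12) * real n powr (-1/16)"
proof -
  define l where "l = real n * p"
  have npos: "0 < real n"
  proof (rule ccontr)
    assume "\<not> 0 < real n" then have "n = 0" by simp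
    then show False using ln72 by simp
  qed
  have l0: "0 \<le> l" unfolding l_def using p npos by simp
  have ln0: "0 < ln (real n)" using ln72 by simp
  have a: "(1 - p) ^ (3 * (k - 7)) \<le> exp 21 * exp (-3 * p * real k)"
  proof -
    have "(1 - p) ^ (3 * (k - 7)) \<le> exp (-p) ^ (3 * (k - 7))"
      using p exp_minus_ge[of p] by (intro power_mono) auto
    also have "\<dots> = exp (- p * real (3 * (k - 7)))" by (simp add: exp_of_nat_mult[symmetric] mult_ac)
    also have "\<dots> \<le> exp (21 * p - 3 * p * real k)"
    proof -
      have "3 * real k - 21 \<le> real (3 * (k - 7))" by linarith
      then have "p * (3 * real k - 21) \<le> p * real (3 * (k - 7))" using p by (intro mult_left_mono) auto
      then show ?thesis by (simp add: algebra_simps)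
    qed
    also have "\<dots> \<le> exp (21 + (-3 * p * real k))" using p by simp
    also have "\<dots> = exp 21 * exp (-3 * p * real k)" by (simp add: exp_add[symmetric])
    finally show ?thesis .
  qed
  have b: "exp (-3 * p * real k) \<le> exp (-3/2 * l + l / 24)"
  proof -
    have "l / ln (real n) \<le> l / 72" using l0 ln72 ln0 by (intro divide_left_mono) auto
    moreover have "p * (real n / 2 - real n / ln (real n)) \<le> p * real k" using k p by (intro mult_left_mono) auto
    moreover have "p * (real n / 2 - real n / ln (real n)) = l / 2 - l / ln (real n)" unfolding l_def by (simp add: algebra_simps)
    ultimately have "l / 2 - l / 72 \<le> p * real k" by linarith
    then show ?thesis by simp
  qed
  have c: "real n ^ 3 * p ^ 2 + real n ^ 4 * p ^ 3 \<le> 2 * real n * (1 + l) ^ 3"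
  proof -
    have "real n ^ 3 * p ^ 2 + real n ^ 4 * p ^ 3 = real n * (l ^ 2 + l ^ 3)" unfolding l_def
      by (simp add: power2_eq_square power3_eq_cube power4_eq_xxxx algebra_simps)
    also have "\<dots> \<le> real n * (2 * (1 + l) ^ 3)"
    proof -
      have "l ^ 2 \<le> (1 + l) ^ 3" using l0 by (simp add: power2_eq_square power3_eq_cube) (smt (verit) mult_nonneg_nonneg mult_le_cancel_left1 mult_mono)
      moreover have "l ^ 3 \<le> (1 + l) ^ 3" using l0 by (intro power_mono) auto
      ultimately show ?thesis using npos by (intro mult_left_mono) auto
    qed
    finally show ?thesis by simp
  qed
  have e: "(1 + l) ^ 12 \<le> 288 ^ 12 * exp (l / 24)"
  proof -
    have "(1 + l) / 288 \<le> 1 + l / 288" using l0 by simp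
    also have "\<dots> \<le> exp (l / 288)" by (rule exp_ge_add_one_self)
    finally have "((1 + l) / 288) ^ 12 \<le> exp (l / 288) ^ 12" using l0 by (intro power_mono) auto
    also have "\<dots> = exp (l / 24)" by (simp add: exp_of_nat_mult[symmetric])
    finally show ?thesis by (simp add: power_divide field_simps)
  qed
  have f: "exp (-(17/12) * l) \<le> real n powr (-17/16)"
  proof -
    have "-(17/12) * l \<le> -(17/12) * ((3/4) * ln (real n))" using lam unfolding l_def by linarith
    then have "exp (-(17/12) * l) \<le> exp (-(17/12) * ((3/4) * ln (real n)))" by simp
    also have "\<dots> = real n powr (-17/16)" using npos by (simp add: powr_def)
    finally show ?thesis .
  qed
  have g: "real n * real n powr (-17/16) = real n powr (-1/16)"
    using npos by (simp add: powr_mult_base)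
  have E0: "0 \<le> (1 - p) ^ (3 * (k - 7))" using p by simp
  have "(real n ^ 3 * (p ^ 2 * (4 * (1 + real n * p) ^ 3) ^ 3 * (1 - p) ^ (3 * (k - 7))) +
     real n ^ 4 * (p ^ 3 * (4 * (1 + real n * p) ^ 3) ^ 3 * (1 - p) ^ (3 * (k - 7))))
     = (real n ^ 3 * p ^ 2 + real n ^ 4 * p ^ 3) * (64 * (1 + l) ^ 9) * (1 - p) ^ (3 * (k - 7))"
    unfolding l_def by (simp add: algebra_simps power_mult_distrib flip: power_mult)
  also have "\<dots> \<le> (2 * real n * (1 + l) ^ 3) * (64 * (1 + l) ^ 9) * (exp 21 * exp (-3/2 * l + l / 24))"
  proof -
    have A: "(1 - p) ^ (3 * (k - 7)) \<le> exp 21 * exp (-3/2 * l + l / 24)"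
      using a b by (smt (verit) exp_gt_zero mult_left_mono)
    have "0 \<le> real n ^ 3 * p ^ 2 + real n ^ 4 * p ^ 3" using p by simp
    then show ?thesis by (intro mult_mono c A) (use l0 npos E0 in auto)
  qed
  also have "\<dots> = 128 * exp 21 * real n * ((1 + l) ^ 12 * exp (-3/2 * l + l / 24))"
    by (simp add: algebra_simps flip: power_add)
  also have "\<dots> \<le> 128 * exp 21 * real n * ((288 ^ 12 * exp (l / 24)) * exp (-3/2 * l + l / 24))"
    using e npos by (intro mult_left_mono mult_right_mono) auto
  also have "\<dots> = 128 * exp 21 * 288 ^ 12 * (real n * exp (-(17/12) * l))"
    by (simp add: mult_ac flip: exp_add)
  also have "\<dots> \<le> 128 * exp 21 * 288 ^ 12 * (real n * real n powr (-17/16))"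
    using f npos by (intro mult_left_mono) auto
  finally show ?thesis unfolding g .
qed




lemma asym1: "(\<lambda>n::nat. real n powr (-1/16)) \<in> o[sequentially](\<lambda>n. 1 / ln (real n))"
  by real_asymp

lemma ev_ln72: "\<forall>\<^sub>F n in sequentially. 72 \<le> ln (real n)"
  by real_asymp

theorem lemma4p10:
  shows "\<exists>\<epsilon>0::real. \<epsilon>0 > 0 \<and>
    (\<forall>\<epsilon>::real. 0 < \<epsilon> \<and> \<epsilon> < \<epsilon>0 \<longrightarrow>
      (\<forall>(p :: nat \<Rightarrow> real) (S :: nat \<Rightarrow> nat set).
        (\<forall>n. 0 \<le> p n \<and> p n \<le> 1) \<longrightarrow>
        (\<forall>\<^sub>F n in sequentially. real n * p n \<ge> (1 - \<epsilon>) * ln (real n)) \<longrightarrow>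
        (\<forall>n. S n \<subseteq> {1..n}) \<longrightarrow>
        (\<forall>\<^sub>F n in sequentially. real (card (S n)) \<ge> real n / 2 - real n / ln (real n)) \<longrightarrow>
        (\<lambda>n. 1 - gnp_prob n (p n) (\<lambda>E. V_set E (S n) \<subseteq> core2 E (S n)))
          \<in> o[sequentially](\<lambda>n. 1 / ln (real n))))"
proof (intro exI[of _ "1/4::real"] conjI allI impI)
  fix \<epsilon> :: real and p :: "nat \<Rightarrow> real" and S :: "nat \<Rightarrow> nat set"
  assume e: "0 < \<epsilon> \<and> \<epsilon> < 1/4" and p: "\<forall>n. 0 \<le> p n \<and> p n \<le> 1"
    and H2: "\<forall>\<^sub>F n in sequentially. real n * p n \<ge> (1 - \<epsilon>) * ln (real n)"
    and S: "\<forall>n. S n \<subseteq> {1..n}"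
    and H4: "\<forall>\<^sub>F n in sequentially. real (card (S n)) \<ge> real n / 2 - real n / ln (real n)"
  define K :: real where "K = 128 * exp 21 * 288 ^ 12"
  let ?f = "\<lambda>n. 1 - gnp_prob n (p n) (\<lambda>E. V_set E (S n) \<subseteq> core2 E (S n))"
  have "?f \<in> O[sequentially](\<lambda>n::nat. real n powr (-1/16))"
  proof (rule bigoI[of _ K])
    show "\<forall>\<^sub>F n in sequentially. norm (?f n) \<le> K * norm (real n powr (-1/16))"
      using H2 H4 ev_ln72
    proof eventually_elim
      case (elim n)
      have p01: "0 \<le> p n" "p n \<le> 1" using p by auto
      have fn: "?f n = gnp_prob n (p n) (\<lambda>E. \<not> V_set E (S n) \<subseteq> core2 E (S n))"
        by (rule gnp_compl)
      have f0: "0 \<le> ?f n" unfolding fn by (rule gnp_nonneg[OF p01])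
      have lam: "(3/4) * ln (real n) \<le> real n * p n"
      proof -
        have "(3/4) * ln (real n) \<le> (1 - \<epsilon>) * ln (real n)" using e elim(3)
          by (intro mult_right_mono) auto
        then show ?thesis using elim(1) by linarith
      qed
      have "?f n \<le> K * real n powr (-1/16)"
        unfolding fn K_def
        by (rule order_trans[OF badprob[OF p01 S[rule_format]] numbound[OF p01 elim(3) lam elim(2)]])
      then show ?case using f0 by simp
    qed
  qed
  then show "?f \<in> o[sequentially](\<lambda>n. 1 / ln (real n))"
    using asym1 by (rule landau_o.big_small_trans)
qed simp


end
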